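(* Let $a,p,b,q$ be the vertices of a convex quadrilateral in the plane, appearing in this order along its boundary. If $|pa|=|pb|$ and $\angle aqb\geqslant 2\pi/3$, then $|pq|\leqslant \frac{2}{\sqrt{3}}\,|pa|$.
   Context: $|xy|$ denotes the Euclidean distance between points $x$ and $y$; $\angle aqb$ is the angle at $q$ between segments $qa$ and $qb$. *)

theory Defs
  imports "HOL-Analysis.Analysis"
begin

definition cross2 :: "real^2 \<Rightarrow> real^2 \<Rightarrow> real" where
  "cross2 u v = u$1 * v$2 - u$2 * v$1"

definition angle_at :: "real^2 \<Rightarrow> real^2 \<Rightarrow> real^2 \<Rightarrow> real" where
  "angle_at a q b = arccos (((a - q) \<bullet> (b - q)) / (norm (a - q) * norm (b - q)))"

text \<open>a, b, c, d are the vertices of a (non-degenerate) convex quadrilateral,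
  listed in this order along its boundary: all consecutive turns are strictly
  in the same direction.\<close>
definition convex_quad :: "real^2 \<Rightarrow> real^2 \<Rightarrow> real^2 \<Rightarrow> real^2 \<Rightarrow> bool" where
  "convex_quad a b c d \<longleftrightarrow>
     (cross2 (b - a) (c - b) > 0 \<and> cross2 (c - b) (d - c) > 0 \<and>
      cross2 (d - c) (a - d) > 0 \<and> cross2 (a - d) (b - a) > 0) \<or>
     (cross2 (b - a) (c - b) < 0 \<and> cross2 (c - b) (d - c) < 0 \<and>
      cross2 (d - c) (a - d) < 0 \<and> cross2 (a - d) (b - a) < 0)"

end

theory Submission
  imports Defs
begin

definition cx :: "real^2 \<Rightarrow> complex" where
  "cx x = Complex (x$1) (x$2)"

lemma norm_cx: "norm (cx x) = norm x"
  by (simp add: cx_def norm_vec_def L2_set_def sum_2 cmod_def power2_eq_square)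

lemma cx_diff: "cx x - cx y = cx (x - y)"
  by (simp add: cx_def complex_eq_iff)

lemma ptolemy:
  fixes a p b q :: "real^2"
  shows "dist p q * dist a b \<le> dist p a * dist q b + dist p b * dist q a"
proof -
  have id: "(cx p - cx q) * (cx a - cx b) = (cx p - cx a) * (cx q - cx b) + (cx p - cx b) * (cx a - cx q)"
    by (simp add: algebra_simps)
  have "norm ((cx p - cx q) * (cx a - cx b)) \<le> norm ((cx p - cx a) * (cx q - cx b)) + norm ((cx p - cx b) * (cx a - cx q))"
    unfolding id by (rule norm_triangle_ineq)
  thus ?thesis
    by (simp add: norm_mult cx_diff norm_cx dist_norm norm_minus_commute)
qed

theorem lemma2:
  fixes a p b q :: "real^2"
  assumes "convex_quad a p b q"
    and "dist p a = dist p b"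
    and "angle_at a q b \<ge> 2 * pi / 3"
  shows "dist p q \<le> 2 / sqrt 3 * dist p a"
proof -
  define u where "u = a - q"
  define v where "v = b - q"
  define c where "c = (u \<bullet> v) / (norm u * norm v)"
  have ang: "arccos c \<ge> 2 * pi / 3" using assms(3) by (simp add: angle_at_def c_def u_def v_def)
  have den: "norm u * norm v \<noteq> 0"
  proof
    assume "norm u * norm v = 0"
    then have "c = 0" by (simp add: c_def)
    then show False using ang pi_gt_zero by simp
  qed
  have nu: "norm u > 0" and nv: "norm v > 0" using den by auto
  have cs: "\<bar>u \<bullet> v\<bar> \<le> norm u * norm v" by (rule Cauchy_Schwarz_ineq2)
  have c1: "\<bar>c\<bar> \<le> 1" using cs den nu nv by (simp add: c_def abs_divide divide_le_eq_1)
  have "arccos (-1/2) = 2 * pi / 3"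
    using arccos_cos[of "2*pi/3"] cos_120 by simp
  with ang have "arccos (-1/2) \<le> arccos c" by simp
  then have "c \<le> -1/2" using arccos_le_mono[of "-1/2" c] c1 by simp
  then have uv: "u \<bullet> v \<le> - (norm u * norm v) / 2"
    using nu nv by (simp add: c_def divide_le_eq)
  have ab: "a - b = u - v" by (simp add: u_def v_def)
  have nab2: "(norm (a - b))^2 = (norm u)^2 + (norm v)^2 - 2 * (u \<bullet> v)"
    unfolding ab by (simp add: power2_norm_eq_inner inner_diff_left inner_diff_right inner_commute)
  have "4 * (norm (a - b))^2 \<ge> 3 * (norm u + norm v)^2"
  proof -
    have "0 \<le> (norm u - norm v)^2" by simp
    then show ?thesis using nab2 uv by (simp add: power2_eq_square algebra_simps)
  qed
  then have "(sqrt 3 * (norm u + norm v))^2 \<le> (2 * norm (a - b))^2"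
    by (simp add: power_mult_distrib)
  then have key0: "sqrt 3 * (norm u + norm v) \<le> 2 * norm (a - b)"
    by (rule power2_le_imp_le) simp
  then have key: "sqrt 3 * (norm u + norm v) \<le> 2 * dist a b"
    by (simp add: dist_norm)
  have dab: "dist a b > 0"
  proof -
    have "sqrt 3 * (norm u + norm v) > 0" using nu nv by (intro mult_pos_pos) (simp, linarith)
    with key show ?thesis by linarith
  qed
  have pt: "dist p q * dist a b \<le> dist p a * (norm u + norm v)"
    using ptolemy[of p q a b] assms(2)
    by (simp add: u_def v_def dist_norm norm_minus_commute algebra_simps)
  have "dist p a * (norm u + norm v) * sqrt 3 \<le> dist p a * (2 * dist a b)"
    using key mult_left_mono[OF key, of "dist p a"] by (simp add: algebra_simps)
  moreover have "dist p q * dist a b * sqrt 3 \<le> dist p a * (norm u + norm v) * sqrt 3"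
    using mult_right_mono[OF pt, of "sqrt 3"] by simp
  ultimately have "dist p q * dist a b * sqrt 3 \<le> 2 / sqrt 3 * dist p a * dist a b * sqrt 3"
    by (simp add: algebra_simps)
  then have "dist p q * dist a b \<le> 2 / sqrt 3 * dist p a * dist a b"
    by (simp add: pos_le_divide_eq)
  then have "dist p q * dist a b \<le> (2 / sqrt 3 * dist p a) * dist a b" by simp
  with dab show ?thesis using mult_le_cancel_right_pos by blast
qed

end
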